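(* Let $\Gamma,\Delta$ be finite sets of formulas, $\alpha$ an atomic mapping for $\Gamma\cup\Delta$, and $\mathcal{Q}$ the quasi-simulation base for $\Gamma\cup\Delta$ and $\alpha$. Let $\Theta_{\mathsf{At}}$ be any (possibly empty) finite set of atoms, $\Sigma$ any non-empty finite set of subformulas of formulas in $\Gamma\cup\Delta$, and $\Sigma_{\mathsf{At}}=\{p^B\mid B\in\Sigma\}$. Then for every base $\mathcal{B}\supseteq\mathcal{Q}$: $\Vdash_{\mathcal{B}}\Sigma,\Theta_{\mathsf{At}}$ if and only if $\vdash_{\mathcal{B}}\ \Rightarrow\Sigma_{\mathsf{At}},\Theta_{\mathsf{At}}$.
   Context: Fix a countably infinite set $\mathsf{At}$ of atoms. Formulas are built from atoms and the constant $\bot$ using the binary connectives $\land,\lor,\to$. All contexts are finite sets (not multisets) of formulas; a comma denotes union; a subscript $\mathsf{At}$ indicates a finite set of atoms. An atomic sequent has the form $\Gamma_{\mathsf{At}} \Rightarrow \Delta_{\mathsf{At}}$. An atomic rule has finitely many (possibly zero) atomic sequents as premises and one atomic sequent as conclusion; a rule with zero premises is an atomic axiom. A base is a (possibly empty) set of atomic rules; $\mathcal{C}\supseteq\mathcal{B}$ ($\mathcal{C}$ extends $\mathcal{B}$) if $\mathcal{C}$ contains every rule of $\mathcal{B}$. Derivability $\vdash_{\mathcal{B}}$ of atomic sequents is the least relation such that: (Axiom/Weakening) if an atomic axiom with conclusion $\Gamma_{\mathsf{At}}\Rightarrow\Delta_{\mathsf{At}}$ is in $\mathcal{B}$, then $\vdash_{\mathcal{B}}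 \Theta_{\mathsf{At}},\Gamma_{\mathsf{At}}\Rightarrow\Delta_{\mathsf{At}},\Sigma_{\mathsf{At}}$ for all sets of atoms $\Theta_{\mathsf{At}},\Sigma_{\mathsf{At}}$; (Mix) if a rule with premises $\Gamma^i_{\mathsf{At}}\Rightarrow\Delta^i_{\mathsf{At}}$ ($1\le i\le n$) and conclusion $\Gamma_{\mathsf{At}}\Rightarrow\Delta_{\mathsf{At}}$ is in $\mathcal{B}$ and $\vdash_{\mathcal{B}} \Theta^i_{\mathsf{At}},\Gamma^i_{\mathsf{At}}\Rightarrow\Delta^i_{\mathsf{At}},\Sigma^i_{\mathsf{At}}$ for each $i$, then $\vdash_{\mathcal{B}} \Theta^1_{\mathsf{At}},\dots,\Theta^n_{\mathsf{At}},\Gamma_{\mathsf{At}}\Rightarrow\Delta_{\mathsf{At}},\Sigma^1_{\mathsf{At}},\dots,\Sigma^n_{\mathsf{At}}$. Support $\Vdash_{\mathcal{B}}$: (At) $\Vdash_{\mathcal{B}}\Gamma_{\mathsf{At}}$ iff $\vdash_{\mathcal{B}}\ \Rightarrow\Gamma_{\mathsf{At}}$; ($\land$) $\Vdash_{\mathcal{B}} A\land B,\Gamma$ iff $\Vdash_{\mathcal{B}}A,\Gamma$ and $\Vdash_{\mathcal{B}}B,\Gamma$; ($\lor$) $\Vdash_{\mathcal{B}}A\lor B,\Gamma$ iff $\Vdash_{\mathcal{B}}A,B,\Gamma$; ($\to$) $\Vdash_{\mathcal{B}}A\to B,\Gamma$ iff $A\Vdash_{\mathcal{B}}B,\Gamma$;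 ($\bot$) $\Vdash_{\mathcal{B}}\bot,\Gamma$ iff $\Vdash_{\mathcal{B}}\Gamma$; (Inf) for $n\ge1$, $\{A^1,\dots,A^n\}\Vdash_{\mathcal{B}}\Delta$ iff for every $\mathcal{C}\supseteq\mathcal{B}$ and all sets of atoms $\Theta^1_{\mathsf{At}},\dots,\Theta^n_{\mathsf{At}}$, if $\Vdash_{\mathcal{C}}\Theta^i_{\mathsf{At}},A^i$ for all $i$ then $\Vdash_{\mathcal{C}}\Theta^1_{\mathsf{At}},\dots,\Theta^n_{\mathsf{At}},\Delta$ (and $\varnothing\Vdash_{\mathcal{B}}\Delta$ means $\Vdash_{\mathcal{B}}\Delta$). The atomic identity rule $\mathsf{Ainit}$ is the atomic axiom $\Gamma_{\mathsf{At}},p\Rightarrow p,\Delta_{\mathsf{At}}$. $\mathcal{HS}$ is the base consisting of all instances of $\mathsf{Ainit}$. Atomic mapping: for a set of formulas $\Sigma_0$ with set of subformulas $S$, an atomic mapping is an injective function $\alpha:S\to\mathsf{At}$ with $\alpha(p)=p$ for every atom $p\in S$; write $p^A:=\alpha(A)$. The quasi-simulation base $\mathcal{Q}$ for $\Sigma_0$ and $\alpha$ consists exactly of $\mathcal{HS}$ together with the following atomic rules, for all formulas $A,B$ such that the displayed compound formula lies in $S$ (and for $p^\bot$ when $\bot\in S$), and all sets of atoms $\Gamma,\Delta,\Gamma',\Delta'$: $Q\land_1$: from $\Gamma\Rightarrow\Delta,p^{A\land B}$ infer $\Gamma\Rightarrow\Delta,p^A$; $Q\land_2$: from $\Gamma\Rightarrow\Delta,p^{A\land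 B}$ infer $\Gamma\Rightarrow\Delta,p^B$; $R\land$: from $\Gamma\Rightarrow\Delta,p^A$ and $\Gamma'\Rightarrow\Delta',p^B$ infer $\Gamma,\Gamma'\Rightarrow\Delta,\Delta',p^{A\land B}$; $Q\lor$: from $\Gamma\Rightarrow\Delta,p^{A\lor B}$ infer $\Gamma\Rightarrow\Delta,p^A,p^B$; $R\lor$: from $\Gamma\Rightarrow\Delta,p^A,p^B$ infer $\Gamma\Rightarrow\Delta,p^{A\lor B}$; $Q\to$: from $\Gamma\Rightarrow\Delta,p^{A\to B}$ and $\Gamma'\Rightarrow\Delta',p^A$ infer $\Gamma,\Gamma'\Rightarrow\Delta,\Delta',p^B$; $R\to$: from $p^A,\Gamma\Rightarrow\Delta,p^B$ infer $\Gamma\Rightarrow\Delta,p^{A\to B}$; $Q\bot$: from $\Gamma\Rightarrow\Delta,p^\bot$ infer $\Gamma\Rightarrow\Delta$. *)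

theory Defs
  imports Main
begin

datatype form = Atom nat | Bot | And form form | Or form form | Imp form form

type_synonym aseq = "nat set \<times> nat set"
type_synonym arule = "aseq list \<times> aseq"
type_synonym abase = "arule set"

definition finite_seq :: "aseq \<Rightarrow> bool" where
  "finite_seq s \<longleftrightarrow> finite (fst s) \<and> finite (snd s)"

definition is_base :: "abase \<Rightarrow> bool" where
  "is_base B \<longleftrightarrow> (\<forall>r\<in>B. finite_seq (snd r) \<and> (\<forall>s\<in>set (fst r). finite_seq s))"

inductive derives :: "abase \<Rightarrow> aseq \<Rightarrow> bool" for B :: abase where
  ax: "([], (G, D)) \<in> B \<Longrightarrow> finite T \<Longrightarrow> finite S \<Longrightarrow> derives B (T \<union> G, D \<union> S)"
| mix: "(ps, (G, D)) \<in> B \<Longrightarrow> length Ts = length ps \<Longrightarrow> length Ss = length ps \<Longrightarrow>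
        (\<forall>i<length ps. finite (Ts ! i) \<and> finite (Ss ! i) \<and>
            derives B ((Ts ! i) \<union> fst (ps ! i), snd (ps ! i) \<union> (Ss ! i))) \<Longrightarrow>
        derives B (\<Union>(set Ts) \<union> G, D \<union> \<Union>(set Ss))"

fun is_atom :: "form \<Rightarrow> bool" where
  "is_atom (Atom p) = True"
| "is_atom _ = False"

fun weight :: "form \<Rightarrow> nat" where
  "weight (Atom p) = 0"
| "weight Bot = 1"
| "weight (And a b) = weight a + weight b + 1"
| "weight (Or a b) = weight a + weight b + 1"
| "weight (Imp a b) = weight a + weight b + 1"

definition ctxw :: "form set \<Rightarrow> nat" where
  "ctxw G = sum weight G"

text \<open>If all its members are atoms,
  clause (At) applies; otherwise one compound formula is chosen and the corresponding
  clause is applied with the remaining context (the paper's clauses are independent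
  of the choice of compound formula).  The clause for implication uses the
  single-hypothesis instance of (Inf).\<close>

function supp :: "abase \<Rightarrow> form set \<Rightarrow> bool" where
  "supp B G =
    (if \<not> finite G then False
     else if (\<forall>F\<in>G. is_atom F) then derives B ({}, {p. Atom p \<in> G})
     else (let F = (SOME F. F \<in> G \<and> \<not> is_atom F); R = G - {F} in
       (case F of
          And X Y \<Rightarrow> supp B (insert X R) \<and> supp B (insert Y R)
        | Or X Y \<Rightarrow> supp B (insert X (insert Y R))
        | Imp X Y \<Rightarrow> (\<forall>C T. is_base C \<and> B \<subseteq> C \<and> finite T \<and> supp C (insert X (Atom ` T))
                          \<longrightarrow> supp C (insert Y R \<union> Atom ` T))
        | Bot \<Rightarrow> supp B R
        | Atom p \<Rightarrow> False)))"
  by pat_completeness auto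

lemma ctxw_atoms: "ctxw (Atom ` T) = 0"
proof (cases "finite T")
  case True thus ?thesis unfolding ctxw_def by (induct T rule: finite_induct) auto
next
  case False
  hence "infinite (Atom ` T)" by (meson finite_imageD inj_onI form.inject(1))
  thus ?thesis by (simp add: ctxw_def)
qed

lemma ctxw_insert_le: "finite R \<Longrightarrow> ctxw (insert X R) \<le> weight X + ctxw R"
  unfolding ctxw_def by (simp add: sum.insert_if)

lemma ctxw_un_le: "finite A \<Longrightarrow> finite B \<Longrightarrow> ctxw (A \<union> B) \<le> ctxw A + ctxw B"
  unfolding ctxw_def by (simp add: sum_Un_nat)

lemma ctxw_remove: "finite G \<Longrightarrow> F \<in> G \<Longrightarrow> ctxw G = weight F + ctxw (G - {F})"
  unfolding ctxw_def by (simp add: sum.remove)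

lemma some_in: "\<exists>x\<in>G. \<not> is_atom x \<Longrightarrow> (SOME F. F \<in> G \<and> \<not> is_atom F) \<in> G"
  by (rule someI2_ex) auto

termination
  apply (relation "measure (\<lambda>(B, G). ctxw G)")
        apply simp_all
  subgoal for G
    using ctxw_remove[of G Bot] some_in[of G] by auto
  subgoal premises p for G x xa X Y
  proof -
    have F: "(SOME F. F \<in> G \<and> \<not> is_atom F) = And X Y" using p(3) by simp
    have "And X Y \<in> G" using some_in[OF p(2)] F by simp
    hence "ctxw G = weight (And X Y) + ctxw (G - {And X Y})" using p(1) ctxw_remove by blast
    moreover have "ctxw (insert X (G - {And X Y})) \<le> weight X + ctxw (G - {And X Y})"
      using p(1) ctxw_insert_le by blast
    ultimately show ?thesis unfolding F by simp
  qed
  subgoal premises p for G x xa X Y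
  proof -
    have F: "(SOME F. F \<in> G \<and> \<not> is_atom F) = And X Y" using p(3) by simp
    have "And X Y \<in> G" using some_in[OF p(2)] F by simp
    hence "ctxw G = weight (And X Y) + ctxw (G - {And X Y})" using p(1) ctxw_remove by blast
    moreover have "ctxw (insert Y (G - {And X Y})) \<le> weight Y + ctxw (G - {And X Y})"
      using p(1) ctxw_insert_le by blast
    ultimately show ?thesis unfolding F by simp
  qed
  subgoal premises p for G x xa X Y
  proof -
    have F: "(SOME F. F \<in> G \<and> \<not> is_atom F) = Or X Y" using p(3) by simp
    have "Or X Y \<in> G" using some_in[OF p(2)] F by simp
    hence "ctxw G = weight (Or X Y) + ctxw (G - {Or X Y})" using p(1) ctxw_remove by blast
    moreover have "ctxw (insert X (insert Y (G - {Or X Y}))) \<le> weight X + (weight Y + ctxw (G - {Or X Y}))"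
      using p(1) ctxw_insert_le
      by (meson add_left_mono finite.insertI finite_Diff order_trans)
    ultimately show ?thesis unfolding F by simp
  qed
  subgoal premises p for G x xa X Y T
  proof -
    have F: "(SOME F. F \<in> G \<and> \<not> is_atom F) = Imp X Y" using p(3) by simp
    have "Imp X Y \<in> G" using some_in[OF p(2)] F by simp
    hence "ctxw G = weight (Imp X Y) + ctxw (G - {Imp X Y})" using p(1) ctxw_remove by blast
    moreover have "ctxw (insert X (Atom ` T)) \<le> weight X"
    proof (cases "finite T")
      case True thus ?thesis using ctxw_insert_le[of "Atom ` T" X] ctxw_atoms by auto
    next
      case False
      hence "infinite (insert X (Atom ` T))"
        by (meson finite_imageD finite_insert inj_onI form.inject(1))
      thus ?thesis by (simp add: ctxw_def)
    qed
    ultimately show ?thesis by simp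
  qed
  subgoal premises p for B G x xa X Y C T
  proof -
    have F: "(SOME F. F \<in> G \<and> \<not> is_atom F) = Imp X Y" using p(3) by simp
    have "Imp X Y \<in> G" using some_in[OF p(2)] F by simp
    hence "ctxw G = weight (Imp X Y) + ctxw (G - {Imp X Y})" using p(1) ctxw_remove by blast
    moreover have "ctxw (insert Y (G - {Imp X Y} \<union> Atom ` T)) \<le> weight Y + ctxw (G - {Imp X Y})"
    proof -
      have ft: "finite T" using p(6) by simp
      have "ctxw (insert Y (G - {Imp X Y} \<union> Atom ` T)) \<le> weight Y + ctxw (G - {Imp X Y} \<union> Atom ` T)"
        using p(1) ft ctxw_insert_le by blast
      moreover have "ctxw (G - {Imp X Y} \<union> Atom ` T) \<le> ctxw (G - {Imp X Y}) + ctxw (Atom ` T)"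
        using p(1) ft ctxw_un_le by blast
      ultimately show ?thesis using ctxw_atoms by simp
    qed
    ultimately show ?thesis unfolding F by simp
  qed
  done

fun subf :: "form \<Rightarrow> form set" where
  "subf (Atom p) = {Atom p}"
| "subf Bot = {Bot}"
| "subf (And a b) = insert (And a b) (subf a \<union> subf b)"
| "subf (Or a b) = insert (Or a b) (subf a \<union> subf b)"
| "subf (Imp a b) = insert (Imp a b) (subf a \<union> subf b)"

definition subformulas :: "form set \<Rightarrow> form set" where
  "subformulas S0 = \<Union>(subf ` S0)"

definition atomic_mapping :: "form set \<Rightarrow> (form \<Rightarrow> nat) \<Rightarrow> bool" where
  "atomic_mapping S0 \<alpha> \<longleftrightarrow> inj_on \<alpha> (subformulas S0) \<and>
     (\<forall>p. Atom p \<in> subformulas S0 \<longrightarrow> \<alpha> (Atom p) = p)"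

definition HS :: abase where
  "HS = {([], (insert p G, insert p D)) | p G D. finite G \<and> finite D}"

definition Qbase :: "form set \<Rightarrow> (form \<Rightarrow> nat) \<Rightarrow> abase" where
  "Qbase S0 \<alpha> = HS
   \<union> {([(G, insert (\<alpha> (And A B)) D)], (G, insert (\<alpha> A) D)) | A B G D.
        And A B \<in> subformulas S0 \<and> finite G \<and> finite D}
   \<union> {([(G, insert (\<alpha> (And A B)) D)], (G, insert (\<alpha> B) D)) | A B G D.
        And A B \<in> subformulas S0 \<and> finite G \<and> finite D}
   \<union> {([(G, insert (\<alpha> A) D), (G', insert (\<alpha> B) D')], (G \<union> G', insert (\<alpha> (And A B)) (D \<union> D')))
        | A B G D G' D'.
        And A B \<in> subformulas S0 \<and> finite G \<and> finite D \<and> finite G' \<and> finite D'}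
   \<union> {([(G, insert (\<alpha> (Or A B)) D)], (G, insert (\<alpha> A) (insert (\<alpha> B) D))) | A B G D.
        Or A B \<in> subformulas S0 \<and> finite G \<and> finite D}
   \<union> {([(G, insert (\<alpha> A) (insert (\<alpha> B) D))], (G, insert (\<alpha> (Or A B)) D)) | A B G D.
        Or A B \<in> subformulas S0 \<and> finite G \<and> finite D}
   \<union> {([(G, insert (\<alpha> (Imp A B)) D), (G', insert (\<alpha> A) D')], (G \<union> G', insert (\<alpha> B) (D \<union> D')))
        | A B G D G' D'.
        Imp A B \<in> subformulas S0 \<and> finite G \<and> finite D \<and> finite G' \<and> finite D'}
   \<union> {([(insert (\<alpha> A) G, insert (\<alpha> B) D)], (G, insert (\<alpha> (Imp A B)) D)) | A B G D.
        Imp A B \<in> subformulas S0 \<and> finite G \<and> finite D}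
   \<union> {([(G, insert (\<alpha> Bot) D)], (G, D)) | G D.
        Bot \<in> subformulas S0 \<and> finite G \<and> finite D}"

end

theory Submission
  imports Defs
begin


declare supp.simps[simp del]
lemma QA1: "And A B \<in> subformulas S0 \<Longrightarrow> finite G \<Longrightarrow> finite D \<Longrightarrow>
  ([(G, insert (\<alpha> (And A B)) D)], (G, insert (\<alpha> A) D)) \<in> Qbase S0 \<alpha>"
  unfolding Qbase_def
  apply (rule UnI1, rule UnI1, rule UnI1, rule UnI1, rule UnI1, rule UnI1, rule UnI1, rule UnI2)
  by blast

lemma QA2: "And A B \<in> subformulas S0 \<Longrightarrow> finite G \<Longrightarrow> finite D \<Longrightarrow>
  ([(G, insert (\<alpha> (And A B)) D)], (G, insert (\<alpha> B) D)) \<in> Qbase S0 \<alpha>"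
  unfolding Qbase_def
  apply (rule UnI1, rule UnI1, rule UnI1, rule UnI1, rule UnI1, rule UnI1, rule UnI2)
  by blast

lemma RA: "And A B \<in> subformulas S0 \<Longrightarrow> finite G \<Longrightarrow> finite D \<Longrightarrow> finite G' \<Longrightarrow> finite D' \<Longrightarrow>
  ([(G, insert (\<alpha> A) D), (G', insert (\<alpha> B) D')], (G \<union> G', insert (\<alpha> (And A B)) (D \<union> D'))) \<in> Qbase S0 \<alpha>"
  unfolding Qbase_def
  apply (rule UnI1, rule UnI1, rule UnI1, rule UnI1, rule UnI1, rule UnI2)
  by blast

lemma QO: "Or A B \<in> subformulas S0 \<Longrightarrow> finite G \<Longrightarrow> finite D \<Longrightarrow>
  ([(G, insert (\<alpha> (Or A B)) D)], (G, insert (\<alpha> A) (insert (\<alpha> B) D))) \<in> Qbase S0 \<alpha>"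
  unfolding Qbase_def
  apply (rule UnI1, rule UnI1, rule UnI1, rule UnI1, rule UnI2)
  by blast

lemma RO: "Or A B \<in> subformulas S0 \<Longrightarrow> finite G \<Longrightarrow> finite D \<Longrightarrow>
  ([(G, insert (\<alpha> A) (insert (\<alpha> B) D))], (G, insert (\<alpha> (Or A B)) D)) \<in> Qbase S0 \<alpha>"
  unfolding Qbase_def
  apply (rule UnI1, rule UnI1, rule UnI1, rule UnI2)
  by blast

lemma QI: "Imp A B \<in> subformulas S0 \<Longrightarrow> finite G \<Longrightarrow> finite D \<Longrightarrow> finite G' \<Longrightarrow> finite D' \<Longrightarrow>
  ([(G, insert (\<alpha> (Imp A B)) D), (G', insert (\<alpha> A) D')], (G \<union> G', insert (\<alpha> B) (D \<union> D'))) \<in> Qbase S0 \<alpha>"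
  unfolding Qbase_def
  apply (rule UnI1, rule UnI1, rule UnI2)
  by blast

lemma RI: "Imp A B \<in> subformulas S0 \<Longrightarrow> finite G \<Longrightarrow> finite D \<Longrightarrow>
  ([(insert (\<alpha> A) G, insert (\<alpha> B) D)], (G, insert (\<alpha> (Imp A B)) D)) \<in> Qbase S0 \<alpha>"
  unfolding Qbase_def
  apply (rule UnI1, rule UnI2)
  by blast

lemma QBot: "Bot \<in> subformulas S0 \<Longrightarrow> finite G \<Longrightarrow> finite D \<Longrightarrow>
  ([(G, insert (\<alpha> Bot) D)], (G, D)) \<in> Qbase S0 \<alpha>"
  unfolding Qbase_def
  apply (rule UnI2)
  by blast

lemma HSI: "finite G \<Longrightarrow> finite D \<Longrightarrow> ([], (insert p G, insert p D)) \<in> Qbase S0 \<alpha>"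
  unfolding Qbase_def HS_def apply (rule UnI1, rule UnI1, rule UnI1, rule UnI1, rule UnI1, rule UnI1, rule UnI1, rule UnI1)
  by blast
lemma HS_sub: "HS \<subseteq> Qbase S0 \<alpha>" unfolding Qbase_def by (intro le_supI1) (rule order_refl)

lemma derives_mono: "derives B s \<Longrightarrow> B \<subseteq> C \<Longrightarrow> derives C s"
proof (induction rule: derives.induct)
  case (ax G D T S) thus ?case by (auto intro: derives.ax)
next
  case (mix ps G D Ts Ss) thus ?case by (auto intro!: derives.mix)
qed

lemma mix1: "([(G0,D0)], (G,D)) \<in> B \<Longrightarrow> finite T \<Longrightarrow> finite S \<Longrightarrow>
   derives B (T \<union> G0, D0 \<union> S) \<Longrightarrow> derives B (T \<union> G, D \<union> S)"
  using derives.mix[of "[(G0,D0)]" G D B "[T]" "[S]"] by simp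

lemma mix2: "([(G1,D1),(G2,D2)], (G,D)) \<in> B \<Longrightarrow> finite T1 \<Longrightarrow> finite S1 \<Longrightarrow>
   finite T2 \<Longrightarrow> finite S2 \<Longrightarrow>
   derives B (T1 \<union> G1, D1 \<union> S1) \<Longrightarrow> derives B (T2 \<union> G2, D2 \<union> S2) \<Longrightarrow>
   derives B (T1 \<union> T2 \<union> G, D \<union> (S1 \<union> S2))"
  using derives.mix[of "[(G1,D1),(G2,D2)]" G D B "[T1,T2]" "[S1,S2]"]
  by (auto simp: less_Suc_eq nth_Cons' Un_assoc)

lemma weak_r: "derives B s \<Longrightarrow> finite E \<Longrightarrow> derives B (fst s, snd s \<union> E)"
proof (induction rule: derives.induct)
  case (ax G D T S)
  then show ?case using derives.ax[of G D B T "S \<union> E"] by (simp add: Un_assoc)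
next
  case (mix ps G D Ts Ss)
  show ?case
  proof (cases "ps = []")
    case True
    then have "Ts = []" "Ss = []" using mix by auto
    then show ?thesis using derives.ax[of G D B "{}" E] mix True by simp
  next
    case False
    let ?Ss = "map (\<lambda>S. S \<union> E) Ss"
    have "derives B (\<Union>(set Ts) \<union> G, D \<union> \<Union>(set ?Ss))"
      apply (rule derives.mix[OF mix(1)])
      using mix by (auto simp: Un_assoc)
    moreover have "\<Union>(set ?Ss) = \<Union>(set Ss) \<union> E" using False mix(3)
      by (cases Ss) auto
    ultimately show ?thesis by (simp add: Un_assoc)
  qed
qed

lemma deduct: "derives C s \<Longrightarrow> C = insert ([], ({}, {p})) B \<Longrightarrow> HS \<subseteq> B \<Longrightarrow>
   derives B (insert p (fst s), snd s)"
proof (induction rule: derives.induct)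
  case (ax G D T S)
  have hs: "([], ({p}, {p})) \<in> B" using ax unfolding HS_def by blast
  show ?case
  proof (cases "([], (G, D)) \<in> B")
    case True
    then show ?thesis using derives.ax[of G D B "insert p T" S] ax by simp
  next
    case False
    then have "G = {}" "D = {p}" using ax by auto
    then show ?thesis using derives.ax[OF hs, of T S] ax by (simp add: insert_commute)
  qed
next
  case (mix ps G D Ts Ss)
  have hs: "([], ({p}, {p})) \<in> B" using mix unfolding HS_def by blast
  show ?case
  proof (cases "ps = []")
    case True
    then have e: "Ts = []" "Ss = []" using mix by auto
    show ?thesis
    proof (cases "([], (G, D)) \<in> B")
      case True
      then show ?thesis using derives.ax[of G D B "{p}" "{}"] e by simp
    next
      case False
      then have "G = {}" "D = {p}" using mix True by auto
      then show ?thesis using derives.ax[OF hs, of "{}" "{}"] e by simp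
    qed
  next
    case False
    then have inB: "(ps, (G, D)) \<in> B" using mix by auto
    let ?Ts = "map (insert p) Ts"
    have "derives B (\<Union>(set ?Ts) \<union> G, D \<union> \<Union>(set Ss))"
      apply (rule derives.mix[OF inB])
      using mix by auto
    moreover have "\<Union>(set ?Ts) = insert p (\<Union>(set Ts))" using False mix(2)
      by (cases Ts) auto
    ultimately show ?thesis by simp
  qed
qed

lemma self_subf: "A \<in> subf A" by (cases A) auto
lemma subf_closed: "A \<in> subf F \<Longrightarrow> subf A \<subseteq> subf F" by (induct F) auto

lemma sub_l: "c \<in> subformulas S0 \<Longrightarrow> c \<in> {And X Y, Or X Y, Imp X Y} \<Longrightarrow> X \<in> subformulas S0 \<and> Y \<in> subformulas S0"
  unfolding subformulas_def using subf_closed self_subf by fastforce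

lemma supp_atoms: "finite G \<Longrightarrow> \<forall>F\<in>G. is_atom F \<Longrightarrow> supp B G = derives B ({}, {p. Atom p \<in> G})"
  apply (rule trans[OF supp.simps[of B G]])
  apply (simp only: if_True if_False not_True_eq_False not_False_eq_True simp_thms)
  apply (subst if_P, assumption, rule refl)
  done
lemma supp_comp: "finite G \<Longrightarrow> \<not> (\<forall>F\<in>G. is_atom F) \<Longrightarrow> F = (SOME F. F \<in> G \<and> \<not> is_atom F) \<Longrightarrow>
  supp B G = (case F of
          And X Y \<Rightarrow> supp B (insert X (G - {F})) \<and> supp B (insert Y (G - {F}))
        | Or X Y \<Rightarrow> supp B (insert X (insert Y (G - {F})))
        | Imp X Y \<Rightarrow> (\<forall>C T. is_base C \<and> B \<subseteq> C \<and> finite T \<and> supp C (insert X (Atom ` T))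
                          \<longrightarrow> supp C (insert Y (G - {F}) \<union> Atom ` T))
        | Bot \<Rightarrow> supp B (G - {F})
        | Atom p \<Rightarrow> False)"
  apply (rule trans[OF supp.simps[of B G]])
  apply (simp only: if_True if_False not_True_eq_False not_False_eq_True simp_thms)
  apply (subst Let_def)+
  apply (simp only:)
  done

lemma main:
  assumes am: "atomic_mapping S0 \<alpha>"
  shows "finite \<Sigma> \<Longrightarrow> \<Sigma> \<subseteq> subformulas S0 \<Longrightarrow> finite \<Theta> \<Longrightarrow> Qbase S0 \<alpha> \<subseteq> B \<Longrightarrow> is_base B \<Longrightarrow>
    supp B (\<Sigma> \<union> Atom ` \<Theta>) \<longleftrightarrow> derives B ({}, \<alpha> ` \<Sigma> \<union> \<Theta>)"
proof (induction "ctxw \<Sigma>" arbitrary: \<Sigma> \<Theta> B rule: less_induct)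
  case less
  have IH: "\<And>\<Sigma>' \<Theta>' C. ctxw \<Sigma>' < ctxw \<Sigma> \<Longrightarrow> finite \<Sigma>' \<Longrightarrow> \<Sigma>' \<subseteq> subformulas S0 \<Longrightarrow> finite \<Theta>' \<Longrightarrow>
     Qbase S0 \<alpha> \<subseteq> C \<Longrightarrow> is_base C \<Longrightarrow> supp C (\<Sigma>' \<union> Atom ` \<Theta>') \<longleftrightarrow> derives C ({}, \<alpha> ` \<Sigma>' \<union> \<Theta>')"
    using less(1) by blast
  let ?G = "\<Sigma> \<union> Atom ` \<Theta>"
  have fG: "finite ?G" using less by simp
  have QB: "Qbase S0 \<alpha> \<subseteq> B" by fact
  show ?case
  proof (cases "\<forall>F\<in>?G. is_atom F")
    case True
    have eq: "{p. Atom p \<in> ?G} = \<alpha> ` \<Sigma> \<union> \<Theta>"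
    proof (intro set_eqI iffI)
      fix x assume "x \<in> {p. Atom p \<in> ?G}"
      then have "Atom x \<in> \<Sigma> \<or> x \<in> \<Theta>" by auto
      moreover have "Atom x \<in> \<Sigma> \<Longrightarrow> \<alpha> (Atom x) = x" using am less(3) unfolding atomic_mapping_def by blast
      ultimately show "x \<in> \<alpha> ` \<Sigma> \<union> \<Theta>" by force
    next
      fix x assume "x \<in> \<alpha> ` \<Sigma> \<union> \<Theta>"
      then consider "x \<in> \<Theta>" | A where "A \<in> \<Sigma>" "x = \<alpha> A" by blast
      then show "x \<in> {p. Atom p \<in> ?G}"
      proof cases
        case 2
        have "is_atom A" using True 2(1) by blast
        then obtain q where q: "A = Atom q" by (cases A) auto
        then have "\<alpha> A = q" using am less(3) 2 unfolding atomic_mapping_def by blast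
        then show ?thesis using 2 q by simp
      qed simp
    qed
    show ?thesis using supp_atoms[OF fG True] eq by simp
  next
    case False
    define F where "F = (SOME F. F \<in> ?G \<and> \<not> is_atom F)"
    have FG: "F \<in> ?G" "\<not> is_atom F" using someI_ex[of "\<lambda>F. F \<in> ?G \<and> \<not> is_atom F"] False
      unfolding F_def by auto
    have FS: "F \<in> \<Sigma>" using FG by auto
    have Fsub: "F \<in> subformulas S0" using FS less(3) by auto
    have R: "?G - {F} = (\<Sigma> - {F}) \<union> Atom ` \<Theta>" using FG(2) by auto
    define rest where "rest = \<alpha> ` (\<Sigma> - {F}) \<union> \<Theta>"
    have frest: "finite rest" using less unfolding rest_def by simp
    have aS: "\<alpha> ` \<Sigma> \<union> \<Theta> = insert (\<alpha> F) rest" using FS unfolding rest_def by auto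
    note unf = supp_comp[OF fG False F_def, of B]
    have wF: "ctxw \<Sigma> = weight F + ctxw (\<Sigma> - {F})" using ctxw_remove less(2) FS by blast
    have fR: "finite (\<Sigma> - {F})" using less by simp
    have sR: "\<Sigma> - {F} \<subseteq> subformulas S0" using less by auto
    show ?thesis
    proof (cases F)
      case (Atom p) then show ?thesis using FG by simp
    next
      case Bot
      have "supp B ?G = supp B ((\<Sigma> - {F}) \<union> Atom ` \<Theta>)" using unf Bot R by simp
      also have "\<dots> = derives B ({}, rest)" unfolding rest_def
        by (rule IH) (use wF Bot fR sR less in auto)
      also have "\<dots> = derives B ({}, insert (\<alpha> F) rest)"
      proof
        assume "derives B ({}, rest)"
        from weak_r[OF this, of "{\<alpha> F}"] show "derives B ({}, insert (\<alpha> F) rest)" by simp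
      next
        assume d: "derives B ({}, insert (\<alpha> F) rest)"
        have "([({}, insert (\<alpha> Bot) {})], ({}, {})) \<in> B"
          using QB QBot[of S0 "{}" "{}" \<alpha>] Fsub Bot by auto
        from mix1[OF this, of "{}" rest] d frest Bot show "derives B ({}, rest)" by simp
      qed
      finally show ?thesis using aS by simp
    next
      case (And X Y)
      have XY: "X \<in> subformulas S0" "Y \<in> subformulas S0" using sub_l[OF Fsub] And by auto
      have "supp B (insert X (?G - {F})) = derives B ({}, insert (\<alpha> X) rest)"
        using IH[of "insert X (\<Sigma> - {F})" \<Theta> B] ctxw_insert_le[OF fR, of X] wF And fR sR XY less R
        unfolding rest_def by auto
      moreover have "supp B (insert Y (?G - {F})) = derives B ({}, insert (\<alpha> Y) rest)"
        using IH[of "insert Y (\<Sigma> - {F})" \<Theta> B] ctxw_insert_le[OF fR, of Y] wF And fR sR XY less R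
        unfolding rest_def by auto
      moreover have "(derives B ({}, insert (\<alpha> X) rest) \<and> derives B ({}, insert (\<alpha> Y) rest))
          = derives B ({}, insert (\<alpha> F) rest)"
      proof
        assume d: "derives B ({}, insert (\<alpha> X) rest) \<and> derives B ({}, insert (\<alpha> Y) rest)"
        have "([({}, insert (\<alpha> X) {}), ({}, insert (\<alpha> Y) {})], ({} \<union> {}, insert (\<alpha> (And X Y)) ({} \<union> {}))) \<in> B"
          using QB RA[of X Y S0 "{}" "{}" "{}" "{}" \<alpha>] Fsub And by auto
        from mix2[OF this, of "{}" rest "{}" rest] d frest And show "derives B ({}, insert (\<alpha> F) rest)" by simp
      next
        assume d: "derives B ({}, insert (\<alpha> F) rest)"
        have "([({}, insert (\<alpha> (And X Y)) {})], ({}, insert (\<alpha> X) {})) \<in> B"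
          using QB QA1[of X Y S0 "{}" "{}" \<alpha>] Fsub And by auto
        from mix1[OF this, of "{}" rest] d frest And have 1: "derives B ({}, insert (\<alpha> X) rest)" by simp
        have "([({}, insert (\<alpha> (And X Y)) {})], ({}, insert (\<alpha> Y) {})) \<in> B"
          using QB QA2[of X Y S0 "{}" "{}" \<alpha>] Fsub And by auto
        from mix1[OF this, of "{}" rest] d frest And have 2: "derives B ({}, insert (\<alpha> Y) rest)" by simp
        show "derives B ({}, insert (\<alpha> X) rest) \<and> derives B ({}, insert (\<alpha> Y) rest)" using 1 2 by simp
      qed
      ultimately show ?thesis using unf And aS by simp
    next
      case (Or X Y)
      have XY: "X \<in> subformulas S0" "Y \<in> subformulas S0" using sub_l[OF Fsub] Or by auto
      have le: "ctxw (insert X (insert Y (\<Sigma> - {F}))) \<le> weight X + (weight Y + ctxw (\<Sigma> - {F}))"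
        using ctxw_insert_le fR by (meson add_left_mono finite.insertI order_trans)
      have "supp B (insert X (insert Y (?G - {F}))) = derives B ({}, insert (\<alpha> X) (insert (\<alpha> Y) rest))"
        using IH[of "insert X (insert Y (\<Sigma> - {F}))" \<Theta> B] le wF Or fR sR XY less R
        unfolding rest_def by auto
      moreover have "derives B ({}, insert (\<alpha> X) (insert (\<alpha> Y) rest)) = derives B ({}, insert (\<alpha> F) rest)"
      proof
        assume d: "derives B ({}, insert (\<alpha> X) (insert (\<alpha> Y) rest))"
        have "([({}, insert (\<alpha> X) (insert (\<alpha> Y) {}))], ({}, insert (\<alpha> (Or X Y)) {})) \<in> B"
          using QB RO[of X Y S0 "{}" "{}" \<alpha>] Fsub Or by auto
        from mix1[OF this, of "{}" rest] d frest Or show "derives B ({}, insert (\<alpha> F) rest)" by simp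
      next
        assume d: "derives B ({}, insert (\<alpha> F) rest)"
        have "([({}, insert (\<alpha> (Or X Y)) {})], ({}, insert (\<alpha> X) (insert (\<alpha> Y) {}))) \<in> B"
          using QB QO[of X Y S0 "{}" "{}" \<alpha>] Fsub Or by auto
        from mix1[OF this, of "{}" rest] d frest Or show "derives B ({}, insert (\<alpha> X) (insert (\<alpha> Y) rest))" by simp
      qed
      ultimately show ?thesis using unf Or aS by simp
    next
      case (Imp X Y)
      have XY: "X \<in> subformulas S0" "Y \<in> subformulas S0" using sub_l[OF Fsub] Imp by auto
      have H1: "supp C (insert X (Atom ` T)) = derives C ({}, insert (\<alpha> X) T)"
        if "Qbase S0 \<alpha> \<subseteq> C" "is_base C" "finite T" for C T
        using IH[of "{X}" T C] that wF Imp XY by (auto simp: ctxw_def)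
      have H2: "supp C (insert Y (?G - {F}) \<union> Atom ` T) = derives C ({}, insert (\<alpha> Y) (rest \<union> T))"
        if "Qbase S0 \<alpha> \<subseteq> C" "is_base C" "finite T" for C T
      proof -
        have e: "insert Y (?G - {F}) \<union> Atom ` T = insert Y (\<Sigma> - {F}) \<union> Atom ` (\<Theta> \<union> T)"
          using R by auto
        show ?thesis unfolding e
          using IH[of "insert Y (\<Sigma> - {F})" "\<Theta> \<union> T" C] ctxw_insert_le[OF fR, of Y] wF Imp fR sR XY less that
          unfolding rest_def by (auto simp: insert_commute Un_assoc)
      qed
      have "supp B ?G = derives B ({}, insert (\<alpha> F) rest)"
      proof
        assume s: "supp B ?G"
        define C where "C = insert ([], ({}, {\<alpha> X})) B"
        have bC: "is_base C" using less(6) unfolding C_def is_base_def finite_seq_def by auto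
        have BC: "B \<subseteq> C" unfolding C_def by auto
        have QC: "Qbase S0 \<alpha> \<subseteq> C" using QB BC by auto
        have "derives C ({} \<union> {}, {\<alpha> X} \<union> {})" by (rule derives.ax) (auto simp: C_def)
        then have "supp C (insert X (Atom ` {}))" using H1[OF QC bC, of "{}"] by simp
        moreover have "\<forall>C T. is_base C \<and> B \<subseteq> C \<and> finite T \<and> supp C (insert X (Atom ` T))
                          \<longrightarrow> supp C (insert Y (?G - {F}) \<union> Atom ` T)" using s unf Imp by simp
        ultimately have "supp C (insert Y (?G - {F}) \<union> Atom ` {})" using bC BC by blast
        then have "derives C ({}, insert (\<alpha> Y) rest)" using H2[OF QC bC, of "{}"] by simp
        from deduct[OF this C_def] QB HS_sub[of S0 \<alpha>] have d: "derives B ({\<alpha> X}, insert (\<alpha> Y) rest)"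
          by auto
        have "([(insert (\<alpha> X) {}, insert (\<alpha> Y) {})], ({}, insert (\<alpha> (Imp X Y)) {})) \<in> B"
          using QB RI[of X Y S0 "{}" "{}" \<alpha>] Fsub Imp by auto
        from mix1[OF this, of "{}" rest] d frest Imp show "derives B ({}, insert (\<alpha> F) rest)" by simp
      next
        assume d: "derives B ({}, insert (\<alpha> F) rest)"
        have "\<forall>C T. is_base C \<and> B \<subseteq> C \<and> finite T \<and> supp C (insert X (Atom ` T))
                          \<longrightarrow> supp C (insert Y (?G - {F}) \<union> Atom ` T)"
        proof (intro allI impI)
          fix C T assume a: "is_base C \<and> B \<subseteq> C \<and> finite T \<and> supp C (insert X (Atom ` T))"
          have QC: "Qbase S0 \<alpha> \<subseteq> C" using a QB by auto
          have dX: "derives C ({}, insert (\<alpha> X) T)" using a H1[OF QC, of T] by simp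
          have dF: "derives C ({}, insert (\<alpha> F) rest)" using derives_mono[OF d] a by simp
          have "([({}, insert (\<alpha> (Imp X Y)) {}), ({}, insert (\<alpha> X) {})], ({} \<union> {}, insert (\<alpha> Y) ({} \<union> {}))) \<in> C"
            using QC QI[of X Y S0 "{}" "{}" "{}" "{}" \<alpha>] Fsub Imp by auto
          from mix2[OF this, of "{}" rest "{}" T] dX dF frest a Imp
          have "derives C ({}, insert (\<alpha> Y) (rest \<union> T))" by simp
          then show "supp C (insert Y (?G - {F}) \<union> Atom ` T)" using H2[OF QC, of T] a by simp
        qed
        then show "supp B ?G" using unf Imp by simp
      qed
      then show ?thesis using aS by simp
    qed
  qed
qed


theorem lemma6:
  fixes \<Gamma> \<Delta> \<Sigma> :: "form set" and \<alpha> :: "form \<Rightarrow> nat" and \<Theta> :: "nat set" and \<B> :: abase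
  assumes "finite \<Gamma>" and "finite \<Delta>"
    and "atomic_mapping (\<Gamma> \<union> \<Delta>) \<alpha>"
    and "finite \<Theta>"
    and "finite \<Sigma>" and "\<Sigma> \<noteq> {}" and "\<Sigma> \<subseteq> subformulas (\<Gamma> \<union> \<Delta>)"
    and "is_base \<B>" and "Qbase (\<Gamma> \<union> \<Delta>) \<alpha> \<subseteq> \<B>"
  shows "supp \<B> (\<Sigma> \<union> Atom ` \<Theta>) \<longleftrightarrow> derives \<B> ({}, \<alpha> ` \<Sigma> \<union> \<Theta>)"
  using main[OF assms(3) assms(5) assms(7) assms(4) assms(9) assms(8)] .

end
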